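(* Let $B$ be an $n_c\times n_v$ binary matrix whose Tanner graph (the protograph) contains a cycle and has girth $g$. Let $\ell\ge1$, $N=2^\ell$, and let $H$ be the $n_cN\times n_vN$ block matrix obtained from $B$ by replacing each entry $B_{h,u}=1$ by a dyadic permutation matrix $P_{{\mathbf x}_{h,u}}$ (with arbitrary ${\mathbf x}_{h,u}\in\mathbb{F}_2^\ell$) and each entry $B_{h,u}=0$ by the $N\times N$ zero matrix. Then the girth of the Tanner graph of $H$ is at most $2g$.
   Context: Rows and columns of $N\times N$ binary matrices are indexed by $\mathbb{F}_2^\ell$ via ${\mathbf x}=(x_1,\dots,x_\ell)\leftrightarrow 1+\sum_i x_i2^{i-1}$. For ${\mathbf a}\in\mathbb{F}_2^\ell$, $P_{\mathbf a}$ is the $N\times N$ binary matrix with $(P_{\mathbf a})_{{\mathbf x},{\mathbf y}}=1$ iff ${\mathbf y}={\mathbf x}+{\mathbf a}$. The Tanner graph of a binary matrix is the bipartite graph with check nodes = rows, variable nodes = columns, edges at the $1$-entries; the girth is the length of a shortest cycle. *)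

theory Defs
  imports Main
begin

text \<open>A binary matrix is given by its entry predicate M r c (True = entry 1)
together with explicit finite sets of row indices R and column indices C.
Tanner graph: check nodes = rows, variable nodes = columns, an edge (r,c)
iff M r c.  A cycle of length 2k (k \<ge> 2) is
r_0 - c_0 - r_1 - c_1 - ... - r_{k-1} - c_{k-1} - r_0
with pairwise distinct rows and pairwise distinct columns.\<close>

definition tanner_cycle ::
  "'r set \<Rightarrow> 'c set \<Rightarrow> ('r \<Rightarrow> 'c \<Rightarrow> bool) \<Rightarrow> nat \<Rightarrow> (nat \<Rightarrow> 'r) \<Rightarrow> (nat \<Rightarrow> 'c) \<Rightarrow> bool" where
  "tanner_cycle R C M k r c \<longleftrightarrow>
     2 \<le> k \<and> inj_on r {..<k} \<and> inj_on c {..<k} \<and>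
     (\<forall>i<k. r i \<in> R \<and> c i \<in> C \<and> M (r i) (c i) \<and> M (r (Suc i mod k)) (c i))"

definition tanner_has_cycle :: "'r set \<Rightarrow> 'c set \<Rightarrow> ('r \<Rightarrow> 'c \<Rightarrow> bool) \<Rightarrow> bool" where
  "tanner_has_cycle R C M \<longleftrightarrow> (\<exists>k r c. tanner_cycle R C M k r c)"

definition tanner_girth :: "'r set \<Rightarrow> 'c set \<Rightarrow> ('r \<Rightarrow> 'c \<Rightarrow> bool) \<Rightarrow> nat" where
  "tanner_girth R C M = (LEAST n. \<exists>k r c. n = 2 * k \<and> tanner_cycle R C M k r c)"

text \<open>Vectors of F_2^l are identified with naturals in {0..<2^l} via
x \<leftrightarrow> \<Sum> x_i 2^(i-1) (the paper's index minus 1); vector addition is bitwise xor.\<close>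
definition dyadic_perm :: "nat \<Rightarrow> nat \<Rightarrow> nat \<Rightarrow> bool" where
  "dyadic_perm a x y \<longleftrightarrow> y = Bit_Operations.xor x a"

text \<open>Lifted matrix H: block row h, block column u, inner indices x, y.
Row index (h,x) corresponds to the flat row h*N + x.\<close>
definition dyadic_lift ::
  "(nat \<Rightarrow> nat \<Rightarrow> bool) \<Rightarrow> (nat \<Rightarrow> nat \<Rightarrow> nat) \<Rightarrow> nat \<times> nat \<Rightarrow> nat \<times> nat \<Rightarrow> bool" where
  "dyadic_lift B X hx uy \<longleftrightarrow>
     B (fst hx) (fst uy) \<and> dyadic_perm (X (fst hx) (fst uy)) (snd hx) (snd uy)"

end

theory Submission
  imports Defs
begin

lemma xor_lt: "(a::nat) < 2 ^ l \<Longrightarrow> b < 2 ^ l \<Longrightarrow> Bit_Operations.xor a b < 2 ^ l"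
proof -
  assume a: "a < 2 ^ l" and b: "b < 2 ^ l"
  have "take_bit l (Bit_Operations.xor a b) = Bit_Operations.xor a b"
    using a b by (simp add: take_bit_nat_eq_self)
  then show ?thesis by (metis take_bit_nat_less_exp)
qed

lemma lift_cycle:
  fixes B :: "nat \<Rightarrow> nat \<Rightarrow> bool" and X :: "nat \<Rightarrow> nat \<Rightarrow> nat"
  assumes cyc: "tanner_cycle {..<nc} {..<nv} B k r c"
    and XB: "\<forall>h<nc. \<forall>u<nv. X h u < 2 ^ l"
  shows "\<exists>m R C. m \<le> 2 * k \<and> tanner_cycle ({..<nc} \<times> {..<2 ^ l}) ({..<nv} \<times> {..<2 ^ l}) (dyadic_lift B X) m R C"
proof -
  have k2: "2 \<le> k" and ir: "inj_on r {..<k}" and ic: "inj_on c {..<k}"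
    and cy: "\<And>i. i < k \<Longrightarrow> r i \<in> {..<nc} \<and> c i \<in> {..<nv} \<and> B (r i) (c i) \<and> B (r (Suc i mod k)) (c i)"
    using cyc unfolding tanner_cycle_def by auto
  define a where "a i = X (r (i mod k)) (c (i mod k))" for i
  define b where "b i = X (r (Suc i mod k)) (c (i mod k))" for i
  define x where "x = rec_nat (0::nat) (\<lambda>i z. Bit_Operations.xor (Bit_Operations.xor z (a i)) (b i))"
  have x0: "x 0 = 0" and xS: "\<And>i. x (Suc i) = Bit_Operations.xor (Bit_Operations.xor (x i) (a i)) (b i)"
    by (simp_all add: x_def)
  define y where "y i = Bit_Operations.xor (x i) (a i)" for i
  have yS: "y i = Bit_Operations.xor (x (Suc i)) (b i)" for i
    by (simp add: xS y_def xor.assoc)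
  have ak: "a (i + k) = a i" "b (i + k) = b i" for i
    by (simp_all add: a_def b_def flip: add_Suc)
  have kpos: "0 < k" using k2 by simp
  have rin: "r (i mod k) < nc" "c (i mod k) < nv" for i
    using cy[of "i mod k"] kpos by auto
  have rin2: "r (Suc i mod k) < nc" for i
    using cy[of "Suc i mod k"] kpos by auto
  have abnd: "a i < 2 ^ l" "b i < 2 ^ l" for i
    using XB rin rin2 by (auto simp: a_def b_def)
  have xbnd: "x i < 2 ^ l" for i
    by (induction i) (auto simp: x0 xS intro!: xor_lt abnd)
  have ybnd: "y i < 2 ^ l" for i
    by (simp add: y_def xor_lt xbnd abnd)
  define s where "s = x k"
  have xper: "x (i + k) = Bit_Operations.xor (x i) s" for i
  proof (induction i)
    case 0 then show ?case by (simp add: x0 s_def)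
  next
    case (Suc i)
    have "x (Suc i + k) = Bit_Operations.xor (Bit_Operations.xor (x (i+k)) (a (i+k))) (b (i+k))"
      using xS[of "i+k"] by simp
    also have "\<dots> = Bit_Operations.xor (x (Suc i)) s"
      using Suc by (simp add: ak xS xor.assoc xor.left_commute xor.commute)
    finally show ?case .
  qed
  have yper: "y (i + k) = Bit_Operations.xor (y i) s" for i
    by (simp add: y_def xper ak xor.assoc xor.left_commute xor.commute)
  have bmod: "B (r (Suc i mod k)) (c (i mod k))" for i
  proof -
    have "B (r (Suc (i mod k) mod k)) (c (i mod k))" using cy[of "i mod k"] kpos by auto
    moreover have "Suc (i mod k) mod k = Suc i mod k" by (simp add: mod_Suc_eq)
    ultimately show ?thesis by simp
  qed
  have bmod0: "B (r (i mod k)) (c (i mod k))" for i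
    using cy[of "i mod k"] kpos by auto
  define R where "R i = (r (i mod k), x i)" for i
  define C where "C i = (c (i mod k), y i)" for i
  have edges: "dyadic_lift B X (R i) (C i) \<and> dyadic_lift B X (R (Suc i)) (C i)" for i
    using bmod[of i] bmod0[of i] y_def[of i] yS[of i]
    by (simp add: dyadic_lift_def dyadic_perm_def R_def C_def a_def b_def)
  have mems: "R i \<in> {..<nc} \<times> {..<2 ^ l} \<and> C i \<in> {..<nv} \<times> {..<2 ^ l}" for i
    using rin xbnd ybnd by (simp add: R_def C_def)
  show ?thesis
  proof (cases "s = 0")
    case True
    have "tanner_cycle ({..<nc} \<times> {..<2 ^ l}) ({..<nv} \<times> {..<2 ^ l}) (dyadic_lift B X) k R C"
      unfolding tanner_cycle_def
    proof (intro conjI allI impI)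
      show "2 \<le> k" by fact
      show "inj_on R {..<k}" using ir by (auto simp: inj_on_def R_def)
      show "inj_on C {..<k}" using ic by (auto simp: inj_on_def C_def)
      fix i assume i: "i < k"
      show "R i \<in> {..<nc} \<times> {..<2 ^ l}" "C i \<in> {..<nv} \<times> {..<2 ^ l}" "dyadic_lift B X (R i) (C i)"
        using mems edges by auto
      have "R (Suc i mod k) = R (Suc i)"
      proof (cases "Suc i = k")
        case True
        then show ?thesis using xper[of 0] \<open>s = 0\<close> by (simp add: R_def x0)
      next
        case False then show ?thesis using i by simp
      qed
      then show "dyadic_lift B X (R (Suc i mod k)) (C i)" using edges by simp
    qed
    then show ?thesis by (intro exI[of _ k] exI[of _ R] exI[of _ C]) simp
  next
    case False
    have "tanner_cycle ({..<nc} \<times> {..<2 ^ l}) ({..<nv} \<times> {..<2 ^ l}) (dyadic_lift B X) (2*k) R C"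
      unfolding tanner_cycle_def
    proof (intro conjI allI impI)
      show "2 \<le> 2*k" using k2 by simp
      have cancel: "s = 0" if "(z::nat) = Bit_Operations.xor z s" for z
      proof -
        have "s = Bit_Operations.xor (Bit_Operations.xor z z) s" by simp
        also have "\<dots> = Bit_Operations.xor z (Bit_Operations.xor z s)" by (simp only: xor.assoc)
        also have "\<dots> = 0" using that[symmetric] by simp
        finally show ?thesis .
      qed
      have key0: "i = j" if "i < k" "j < 2*k" "i mod k = j mod k" "f i = f j"
        and fp: "\<And>t. f (t + k) = Bit_Operations.xor (f t) s" for i j and f :: "nat \<Rightarrow> nat"
      proof (rule ccontr)
        assume ne: "i \<noteq> j"
        have im: "i mod k = i" using that(1) by simp
        have "\<not> j < k" using ne im that(3) by (metis mod_less)
        then have "j mod k = j - k" using that(2) by (simp add: le_mod_geq)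
        then have "j = i + k" using im that(3) \<open>\<not> j < k\<close> by linarith
        then have "f i = Bit_Operations.xor (f i) s" using fp[of i] that(4) by simp
        then show False using cancel \<open>s \<noteq> 0\<close> by blast
      qed
      have key: "i = j" if "i < 2*k" "j < 2*k" "i mod k = j mod k" "f i = f j"
        and fp: "\<And>t. f (t + k) = Bit_Operations.xor (f t) s" for i j and f :: "nat \<Rightarrow> nat"
      proof (cases "i < k")
        case True then show ?thesis using key0[of i j f] that by blast
      next
        case False
        show ?thesis
        proof (cases "j < k")
          case True then show ?thesis using key0[of j i f] that by (metis)
        next
          case False
          then have "j mod k = j - k" "i mod k = i - k" using \<open>\<not> i < k\<close> that by (simp_all add: le_mod_geq)
          then show ?thesis using that False \<open>\<not> i < k\<close> by linarith
        qed
      qed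
      show "inj_on R {..<2*k}"
      proof (rule inj_onI)
        fix i j assume "i \<in> {..<2*k}" "j \<in> {..<2*k}" "R i = R j"
        then have "r (i mod k) = r (j mod k)" "x i = x j" by (auto simp: R_def)
        then have "i mod k = j mod k" using ir kpos by (auto simp: inj_on_def)
        then show "i = j" using key[of i j x, OF _ _ _ \<open>x i = x j\<close> xper] \<open>i \<in> _\<close> \<open>j \<in> _\<close> by simp
      qed
      show "inj_on C {..<2*k}"
      proof (rule inj_onI)
        fix i j assume "i \<in> {..<2*k}" "j \<in> {..<2*k}" "C i = C j"
        then have "c (i mod k) = c (j mod k)" "y i = y j" by (auto simp: C_def)
        then have "i mod k = j mod k" using ic kpos by (auto simp: inj_on_def)
        then show "i = j" using key[of i j y, OF _ _ _ \<open>y i = y j\<close> yper] \<open>i \<in> _\<close> \<open>j \<in> _\<close> by simp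
      qed
      fix i assume i: "i < 2*k"
      show "R i \<in> {..<nc} \<times> {..<2 ^ l}" "C i \<in> {..<nv} \<times> {..<2 ^ l}" "dyadic_lift B X (R i) (C i)"
        using mems edges by auto
      have "R (Suc i mod (2*k)) = R (Suc i)"
      proof (cases "Suc i = 2*k")
        case True
        have "x (2*k) = 0" using xper[of k] xper[of 0] x0
          by (simp add: mult_2)
        then show ?thesis using True by (simp add: R_def x0)
      next
        case False then show ?thesis using i by simp
      qed
      then show "dyadic_lift B X (R (Suc i mod (2*k))) (C i)" using edges by simp
    qed
    then show ?thesis by (intro exI[of _ "2*k"] exI[of _ R] exI[of _ C]) simp
  qed
qed

theorem mainTheorem7:
  fixes B :: "nat \<Rightarrow> nat \<Rightarrow> bool" and X :: "nat \<Rightarrow> nat \<Rightarrow> nat"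
    and nc nv l g :: nat
  assumes "tanner_has_cycle {..<nc} {..<nv} B"
    and "g = tanner_girth {..<nc} {..<nv} B"
    and "1 \<le> l"
    and "\<forall>h<nc. \<forall>u<nv. X h u < 2 ^ l"
  shows "tanner_has_cycle ({..<nc} \<times> {..<2 ^ l}) ({..<nv} \<times> {..<2 ^ l}) (dyadic_lift B X)
    \<and> tanner_girth ({..<nc} \<times> {..<2 ^ l}) ({..<nv} \<times> {..<2 ^ l}) (dyadic_lift B X) \<le> 2 * g"
proof -
  let ?P = "\<lambda>n. \<exists>k r c. n = 2 * k \<and> tanner_cycle {..<nc} {..<nv} B k r c"
  obtain k0 r0 c0 where "tanner_cycle {..<nc} {..<nv} B k0 r0 c0"
    using assms(1) unfolding tanner_has_cycle_def by blast
  then have "?P (2*k0)" by blast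
  then have "?P g" unfolding assms(2) tanner_girth_def by (rule LeastI)
  then obtain k r c where g: "g = 2*k" and cyc: "tanner_cycle {..<nc} {..<nv} B k r c" by blast
  obtain m R C where m: "m \<le> 2*k"
    and lc: "tanner_cycle ({..<nc} \<times> {..<2 ^ l}) ({..<nv} \<times> {..<2 ^ l}) (dyadic_lift B X) m R C"
    using lift_cycle[OF cyc assms(4)] by blast
  have "tanner_girth ({..<nc} \<times> {..<2 ^ l}) ({..<nv} \<times> {..<2 ^ l}) (dyadic_lift B X) \<le> 2*m"
    unfolding tanner_girth_def by (rule Least_le) (use lc in blast)
  then show ?thesis using lc m g unfolding tanner_has_cycle_def by auto
qed

end
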